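(* Let $H\in(0,1)$ and let $f:[0,1]\to\mathbb R^n$ be piecewise linear with $f(0)=0$. Then $f\in\mathcal H_H$ and $\|f\|_{\mathcal H_H}\lesssim|\dot f|_\infty(1+|\mathcal D_{\dot f}|)$.
   Context: $\mathcal H_H$ is the Cameron–Martin space of the Riemann–Liouville process $\tilde B_t=\alpha_H\int_0^t(t-u)^{H-1/2}\,dW_u$, $t\in[0,1]$ ($W$ a standard Wiener process, $\alpha_H>0$ a constant): $\mathcal H_H=\mathscr K_H(H_0^1)$ where $H_0^1=\{\int_0^\cdot\dot f:\dot f\in L^2([0,1],\mathbb R^n)\}$ and $\mathscr K_Hf(t)=\alpha_H\int_0^t(t-s)^{H-3/2}f(s)\,ds$ for $H>\frac12$, $\mathscr K_Hf(t)=\alpha_H\frac{d}{dt}\int_0^t(t-s)^{H-1/2}f(s)\,ds$ for $H<\frac12$, with inner product $\langle\mathscr K_Hf,\mathscr K_Hg\rangle_{\mathcal H_H}=\langle\dot f,\dot g\rangle_{L^2}$. $\mathcal D_{\dot f}$ is the finite set of discontinuities of $\dot f$. $a\lesssim b$ means $a\le Cb$ with $C$ independent of $f$. *)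

theory Defs
  imports "HOL-Analysis.Analysis"
begin

definition L2_01 :: "(real \<Rightarrow> 'a::euclidean_space) \<Rightarrow> bool" where
  "L2_01 g \<longleftrightarrow> g absolutely_integrable_on {0..1} \<and>
                 (\<lambda>s. (norm (g s))^2) integrable_on {0..1}"

definition L2_norm01 :: "(real \<Rightarrow> 'a::euclidean_space) \<Rightarrow> real" where
  "L2_norm01 g = sqrt (integral {0..1} (\<lambda>s. (norm (g s))^2))"

text \<open>Primitive t |-> int_0^t g; elements of H_0^1 are the primitives of L^2 functions.\<close>
definition prim :: "(real \<Rightarrow> 'a::euclidean_space) \<Rightarrow> real \<Rightarrow> 'a" where
  "prim g = (\<lambda>t. integral {0..t} g)"

text \<open>The operator K_H (with constant alpha). For H > 1/2 the fractional integral,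
  for H <= 1/2 the derivative formula (which at H = 1/2 reduces to the identity times alpha).\<close>
definition KH :: "real \<Rightarrow> real \<Rightarrow> (real \<Rightarrow> 'a::euclidean_space) \<Rightarrow> real \<Rightarrow> 'a" where
  "KH \<alpha> H f = (\<lambda>t.
     if H > 1/2 then \<alpha> *\<^sub>R integral {0..t} (\<lambda>s. ((t - s) powr (H - 3/2)) *\<^sub>R f s)
     else \<alpha> *\<^sub>R vector_derivative
            (\<lambda>\<tau>. integral {0..\<tau>} (\<lambda>s. ((\<tau> - s) powr (H - 1/2)) *\<^sub>R f s))
            (at t within {0..1}))"

text \<open>Cameron--Martin space H_H = K_H(H_0^1), functions compared on [0,1].\<close>
definition CM :: "real \<Rightarrow> real \<Rightarrow> (real \<Rightarrow> 'a::euclidean_space) set" where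
  "CM \<alpha> H = {h. \<exists>g. L2_01 g \<and> (\<forall>t\<in>{0..1}. h t = KH \<alpha> H (prim g) t)}"

text \<open>Cameron--Martin norm: ||K_H f|| = ||f'||_{L^2} (infimum over preimages; K_H is injective,
  so this is the norm defined via the isometry).\<close>
definition CM_norm :: "real \<Rightarrow> real \<Rightarrow> (real \<Rightarrow> 'a::euclidean_space) \<Rightarrow> real" where
  "CM_norm \<alpha> H h = Inf {L2_norm01 g | g. L2_01 g \<and> (\<forall>t\<in>{0..1}. h t = KH \<alpha> H (prim g) t)}"

definition piecewise_linear01 :: "(real \<Rightarrow> 'a::euclidean_space) \<Rightarrow> bool" where
  "piecewise_linear01 f \<longleftrightarrow> (\<exists>ts::real list.
      length ts \<ge> 2 \<and> sorted_wrt (<) ts \<and> hd ts = 0 \<and> last ts = 1 \<and>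
      (\<forall>i < length ts - 1. \<exists>a b. \<forall>t\<in>{ts!i..ts!(i+1)}. f t = a + t *\<^sub>R b))"

definition fdot :: "(real \<Rightarrow> 'a::euclidean_space) \<Rightarrow> real \<Rightarrow> 'a" where
  "fdot f t = vector_derivative f (at t)"

definition sup_fdot :: "(real \<Rightarrow> 'a::euclidean_space) \<Rightarrow> real" where
  "sup_fdot f = Sup {norm (fdot f t) | t. t \<in> {0<..<1} \<and> f differentiable (at t)}"

definition disc_fdot :: "(real \<Rightarrow> 'a::euclidean_space) \<Rightarrow> real set" where
  "disc_fdot f = {t \<in> {0<..<1}. \<not> isCont (fdot f) t}"

end

theory Submission
  imports Defs
begin


definition pp :: "real \<Rightarrow> real \<Rightarrow> real \<Rightarrow> real" where
  "pp a q s = (max (s - a) 0) powr q"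

lemma beta_shift:
  fixes p q a t :: real
  assumes p: "p > -1" and q: "q > -1" and at: "a < t"
  shows "((\<lambda>s. (t - s) powr p * (s - a) powr q) has_integral
           (t - a) powr (p + q + 1) * Beta (q + 1) (p + 1)) {a..t}"
proof -
  define L where "L = t - a"
  have L: "L > 0" using at by (simp add: L_def)
  have B: "((\<lambda>u. u powr (q + 1 - 1) * (1 - u) powr (p + 1 - 1)) has_integral Beta (q+1) (p+1)) (cbox 0 1)"
    using has_integral_Beta_real[of "q+1" "p+1"] p q by simp
  have "((\<lambda>s. (\<lambda>u. u powr (q + 1 - 1) * (1 - u) powr (p + 1 - 1)) ((1/L) *\<^sub>R s + (- a / L)))
          has_integral (Beta (q+1) (p+1) /\<^sub>R (1/L) ^ DIM(real)))
         (cbox ((0 - (- a / L)) /\<^sub>R (1/L)) ((1 - (- a / L)) /\<^sub>R (1/L)))"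
    by (rule has_integral_affinity'[OF B]) (use L in simp)
  also have "cbox ((0 - (- a / L)) /\<^sub>R (1/L)) ((1 - (- a / L)) /\<^sub>R (1/L)) = {a..t}"
    using L by (simp add: L_def field_simps)
  finally have I0: "((\<lambda>s. ((1 / L) *\<^sub>R s + - a / L) powr (q + 1 - 1) *
           (1 - ((1 / L) *\<^sub>R s + - a / L)) powr (p + 1 - 1)) has_integral (L * Beta (q+1) (p+1))) {a..t}"
    by simp
  have I: "((\<lambda>s. ((s - a) / L) powr q * ((t - s) / L) powr p) has_integral (L * Beta (q+1) (p+1))) {a..t}"
  proof (rule has_integral_cong[THEN iffD1, OF _ I0])
    fix s assume "s \<in> {a..t}"
    have e1: "(1 / L) *\<^sub>R s + - a / L = (s - a) / L" by (simp add: diff_divide_distrib)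
    have e2: "1 - (s - a) / L = (t - s) / L" using L by (simp add: L_def field_simps)
    show "((1 / L) *\<^sub>R s + - a / L) powr (q + 1 - 1) * (1 - ((1 / L) *\<^sub>R s + - a / L)) powr (p + 1 - 1)
          = ((s - a) / L) powr q * ((t - s) / L) powr p"
      unfolding e1 e2 by simp
  qed
  have I2: "((\<lambda>s. L powr (p + q) * (((s - a) / L) powr q * ((t - s) / L) powr p)) has_integral
             L powr (p + q) * (L * Beta (q+1) (p+1))) {a..t}"
    by (rule has_integral_mult_right[OF I])
  show ?thesis
  proof -
    have "((\<lambda>s. (t - s) powr p * (s - a) powr q) has_integral L powr (p + q) * (L * Beta (q+1) (p+1))) {a..t}"
      apply (rule has_integral_cong[THEN iffD1, OF _ I2])
      using L by (auto simp: powr_divide powr_add field_simps)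
    moreover have "L powr (p + q) * (L * Beta (q+1) (p+1)) = (t - a) powr (p + q + 1) * Beta (q + 1) (p + 1)"
      using L by (simp add: powr_add L_def)
    ultimately show ?thesis by simp
  qed
qed

lemma pp_nonneg: "pp a q s \<ge> 0" by (simp add: pp_def)

lemma pp_zero: "s \<le> a \<Longrightarrow> pp a q s = 0" by (simp add: pp_def)

lemma pp_pos: "a \<le> s \<Longrightarrow> pp a q s = (s - a) powr q" by (simp add: pp_def)

lemma pp_Beta:
  fixes p q a t :: real
  assumes p: "p > -1" and q: "q > -1" and a: "0 \<le> a" and t: "0 \<le> t"
  shows "((\<lambda>s. (t - s) powr p * pp a q s) has_integral pp a (p + q + 1) t * Beta (q + 1) (p + 1)) {0..t}"
proof (cases "t \<le> a")
  case True
  have "((\<lambda>s. (t - s) powr p * pp a q s) has_integral 0) {0..t}"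
    by (rule has_integral_cong[THEN iffD1, OF _ has_integral_0]) (use True in \<open>auto simp: pp_zero\<close>)
  then show ?thesis using True by (simp add: pp_zero)
next
  case False
  have I1: "((\<lambda>s. (t - s) powr p * pp a q s) has_integral 0) {0..a}"
    by (rule has_integral_cong[THEN iffD1, OF _ has_integral_0]) (auto simp: pp_zero)
  have I2: "((\<lambda>s. (t - s) powr p * pp a q s) has_integral (t - a) powr (p + q + 1) * Beta (q + 1) (p + 1)) {a..t}"
    by (rule has_integral_cong[THEN iffD1, OF _ beta_shift[OF p q]]) (use False in \<open>auto simp: pp_pos\<close>)
  have "((\<lambda>s. (t - s) powr p * pp a q s) has_integral 0 + (t - a) powr (p + q + 1) * Beta (q + 1) (p + 1)) {0..t}"
    by (rule has_integral_combine[OF a _ I1 I2]) (use False in simp)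
  then show ?thesis using False by (simp add: pp_pos)
qed

lemma Beta_one2: "q > -1 \<Longrightarrow> Beta (q + 1) (1::real) = 1 / (q + 1)"
proof -
  assume q: "q > -1"
  have "q + 1 \<notin> \<int>\<^sub>\<le>\<^sub>0" using q nonpos_Ints_nonpos by force
  then have "Gamma (q + 1 + 1) = (q + 1) * Gamma (q + 1)" by (rule Gamma_plus1)
  moreover have "Gamma (q + 1) > 0" using q by simp
  ultimately show ?thesis by (simp add: Beta_def)
qed

lemma pp_prim:
  fixes q a t :: real
  assumes q: "q > -1" and a: "0 \<le> a" and t: "0 \<le> t"
  shows "(pp a q has_integral pp a (q + 1) t / (q + 1)) {0..t}"
proof -
  have "((\<lambda>s. (t - s) powr 0 * pp a q s) has_integral pp a (0 + q + 1) t * Beta (q + 1) (0 + 1)) {0..t}"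
    by (rule pp_Beta) (use q a t in auto)
  then have I: "((\<lambda>s. (t - s) powr 0 * pp a q s) has_integral pp a (q + 1) t / (q + 1)) {0..t}"
    using Beta_one2[OF q] by simp
  show ?thesis
    by (rule has_integral_spike_finite[of "{t}", OF _ _ I]) auto
qed

lemma pp_one: "pp a 1 s = max (s - a) 0" by (simp add: pp_def)

lemma pp_two: "pp a 2 s = (max (s - a) 0)^2"
  by (cases "s \<le> a") (auto simp: pp_def powr_numeral)

lemma pp_sq: "(pp a q s)^2 = pp a (2 * q) s"
  by (cases "s \<le> a") (auto simp: pp_def powr_power)

lemma pp_deriv2: "((\<lambda>x. pp a 2 x) has_real_derivative 2 * pp a 1 t) (at t)"
proof -
  consider "t < a" | "t = a" | "t > a" by linarith
  then show ?thesis
  proof cases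
    case 1
    have "((\<lambda>x. 0) has_real_derivative 2 * pp a 1 t) (at t)" using 1 by (simp add: pp_one)
    then show ?thesis
      by (rule has_field_derivative_transform_within_open[of _ _ _ "{..<a}"])
         (use 1 in \<open>auto simp: pp_two pp_one\<close>)
  next
    case 3
    have "((\<lambda>x. (x - a)^2) has_real_derivative 2 * pp a 1 t) (at t)"
      using 3 by (auto intro!: derivative_eq_intros simp: pp_one)
    then show ?thesis
      by (rule has_field_derivative_transform_within_open[of _ _ _ "{a<..}"])
         (use 3 in \<open>auto simp: pp_two pp_one\<close>)
  next
    case 2
    have "((\<lambda>y. max (y - a) 0) \<longlongrightarrow> max (a - a) 0) (at a)"
      by (intro tendsto_intros)
    then have L: "((\<lambda>y. max (y - a) 0) \<longlongrightarrow> 0) (at a)" by simp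
    have "((\<lambda>y. (pp a 2 y - pp a 2 a) / (y - a)) \<longlongrightarrow> 0) (at a)"
    proof (rule tendsto_cong[THEN iffD1, OF _ L])
      show "\<forall>\<^sub>F x in at a. max (x - a) 0 = (pp a 2 x - pp a 2 a) / (x - a)"
        unfolding eventually_at_filter pp_two power2_eq_square
        by (rule always_eventually) (auto simp: max_def)
    qed
    then show ?thesis using 2 by (simp add: has_field_derivative_iff pp_one)
  qed
qed



lemma core:
  fixes \<alpha> H :: real
  assumes H0: "0 < H" and H1: "H < 1" and \<alpha>: "\<alpha> > 0"
  shows "\<exists>C>0. \<forall>(A::real set) (d::real \<Rightarrow> 'a::euclidean_space) K f.
     finite A \<and> A \<subseteq> {0..1} \<and> K \<ge> 0 \<and> (\<forall>a\<in>A. norm (d a) \<le> K) \<and>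
     (\<forall>t\<in>{0..1}. f t = (\<Sum>a\<in>A. pp a 1 t *\<^sub>R d a)) \<longrightarrow>
     f \<in> CM \<alpha> H \<and> CM_norm \<alpha> H f \<le> C * K * real (card A)"
proof -
  define \<beta> where "\<beta> = 1/2 - H"
  have \<beta>1: "\<beta> > -1/2" "\<beta> < 1/2" using H0 H1 by (auto simp: \<beta>_def)
  define B1 where "B1 = Beta (\<beta> + 2) (H - 1/2)"
  define B2 where "B2 = Beta (\<beta> + 2) (H + 1/2)"
  define \<kappa> where "\<kappa> = (if H > 1/2 then (\<beta> + 1) / (\<alpha> * B1) else (\<beta> + 1) / (2 * \<alpha> * B2))"
  have B1pos: "H > 1/2 \<Longrightarrow> B1 > 0" unfolding B1_def Beta_def using \<beta>1 by simp
  have B2pos: "B2 > 0" unfolding B2_def Beta_def using \<beta>1 H0 by simp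
  have \<kappa>pos: "\<kappa> > 0" unfolding \<kappa>_def using B1pos B2pos \<beta>1 \<alpha> by auto
  define C where "C = \<kappa> / sqrt (2 * \<beta> + 1)"
  have Cpos: "C > 0" unfolding C_def using \<kappa>pos \<beta>1 by simp
  show ?thesis
  proof (rule exI[of _ C], intro conjI allI impI)
    show "C > 0" by (rule Cpos)
    fix A :: "real set" and d :: "real \<Rightarrow> 'a" and K :: real and f :: "real \<Rightarrow> 'a"
    assume asm: "finite A \<and> A \<subseteq> {0..1} \<and> K \<ge> 0 \<and> (\<forall>a\<in>A. norm (d a) \<le> K) \<and>
     (\<forall>t\<in>{0..1}. f t = (\<Sum>a\<in>A. pp a 1 t *\<^sub>R d a))"
    then have finA: "finite A" and A01: "A \<subseteq> {0..1}" and K0: "K \<ge> 0"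
      and dK: "\<And>a. a \<in> A \<Longrightarrow> norm (d a) \<le> K"
      and frep: "\<And>t. t \<in> {0..1} \<Longrightarrow> f t = (\<Sum>a\<in>A. pp a 1 t *\<^sub>R d a)" by auto
    have a0: "\<And>a. a \<in> A \<Longrightarrow> 0 \<le> a" using A01 by auto
    define g where "g = (\<lambda>s. \<Sum>a\<in>A. (\<kappa> * pp a \<beta> s) *\<^sub>R d a)"
    have g_int: "(g has_integral (\<Sum>a\<in>A. (\<kappa> * (pp a (\<beta> + 1) t / (\<beta> + 1))) *\<^sub>R d a)) {0..t}"
      if "0 \<le> t" for t
      unfolding g_def
      by (intro has_integral_sum finA has_integral_scaleR_left has_integral_mult_right pp_prim)
         (use \<beta>1 a0 that in auto)
    have prim_g: "prim g t = (\<Sum>a\<in>A. (\<kappa> * (pp a (\<beta> + 1) t / (\<beta> + 1))) *\<^sub>R d a)" if "0 \<le> t" for t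
      unfolding prim_def using g_int[OF that] by (simp add: integral_unique)
    have KHeq: "f t = KH \<alpha> H (prim g) t" if t: "t \<in> {0..1}" for t
    proof (cases "H > 1/2")
      case True
      have e: "H - 3/2 + (\<beta> + 1) + 1 = 1" "\<beta> + 1 + 1 = \<beta> + 2" "H - 3/2 + 1 = H - 1/2"
        by (auto simp: \<beta>_def)
      have I: "((\<lambda>s. \<Sum>a\<in>A. (\<kappa> / (\<beta> + 1) * ((t - s) powr (H - 3/2) * pp a (\<beta> + 1) s)) *\<^sub>R d a)
               has_integral (\<Sum>a\<in>A. (\<kappa> / (\<beta> + 1) * (pp a 1 t * B1)) *\<^sub>R d a)) {0..t}"
      proof (intro has_integral_sum finA has_integral_scaleR_left has_integral_mult_right)
        fix a assume "a \<in> A"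
        have "((\<lambda>s. (t - s) powr (H - 3/2) * pp a (\<beta> + 1) s) has_integral
               pp a (H - 3/2 + (\<beta> + 1) + 1) t * Beta (\<beta> + 1 + 1) (H - 3/2 + 1)) {0..t}"
          by (rule pp_Beta) (use True \<beta>1 a0[OF \<open>a \<in> A\<close>] t in auto)
        then show "((\<lambda>s. (t - s) powr (H - 3/2) * pp a (\<beta> + 1) s) has_integral pp a 1 t * B1) {0..t}"
          unfolding e B1_def .
      qed
      have I2: "((\<lambda>s. (t - s) powr (H - 3/2) *\<^sub>R prim g s)
               has_integral (\<Sum>a\<in>A. (\<kappa> / (\<beta> + 1) * (pp a 1 t * B1)) *\<^sub>R d a)) {0..t}"
      proof (rule has_integral_cong[THEN iffD1, OF _ I])
        fix s assume s: "s \<in> {0..t}"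
        show "(\<Sum>a\<in>A. (\<kappa> / (\<beta> + 1) * ((t - s) powr (H - 3/2) * pp a (\<beta> + 1) s)) *\<^sub>R d a)
              = (t - s) powr (H - 3/2) *\<^sub>R prim g s"
          using s by (simp add: prim_g scaleR_sum_right mult_ac)
      qed
      have "KH \<alpha> H (prim g) t = \<alpha> *\<^sub>R (\<Sum>a\<in>A. (\<kappa> / (\<beta> + 1) * (pp a 1 t * B1)) *\<^sub>R d a)"
        using True integral_unique[OF I2] by (simp add: KH_def)
      also have "\<dots> = (\<Sum>a\<in>A. pp a 1 t *\<^sub>R d a)"
        unfolding scaleR_sum_right
      proof (rule sum.cong[OF refl])
        fix a assume "a \<in> A"
        have "\<alpha> * (\<kappa> / (\<beta> + 1) * (pp a 1 t * B1)) = pp a 1 t"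
        proof -
          have "\<kappa> / (\<beta> + 1) = 1 / (\<alpha> * B1)" using True \<beta>1 by (simp add: \<kappa>_def)
          then show ?thesis using B1pos[OF True] \<alpha> by simp
        qed
        then show "\<alpha> *\<^sub>R (\<kappa> / (\<beta> + 1) * (pp a 1 t * B1)) *\<^sub>R d a = pp a 1 t *\<^sub>R d a"
          by simp
      qed
      finally show ?thesis using frep[OF t] by simp
    next
      case False
      have e: "H - 1/2 + (\<beta> + 1) + 1 = 2" "\<beta> + 1 + 1 = \<beta> + 2" "H - 1/2 + 1 = H + 1/2"
        by (auto simp: \<beta>_def)
      define G where "G = (\<lambda>\<tau>. \<Sum>a\<in>A. (\<kappa> / (\<beta> + 1) * (pp a 2 \<tau> * B2)) *\<^sub>R d a)"
      define F where "F = (\<lambda>\<tau>. integral {0..\<tau>} (\<lambda>s. ((\<tau> - s) powr (H - 1/2)) *\<^sub>R prim g s))"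
      have FG: "F \<tau> = G \<tau>" if \<tau>: "\<tau> \<in> {0..1}" for \<tau>
      proof -
        have I: "((\<lambda>s. \<Sum>a\<in>A. (\<kappa> / (\<beta> + 1) * ((\<tau> - s) powr (H - 1/2) * pp a (\<beta> + 1) s)) *\<^sub>R d a)
                 has_integral G \<tau>) {0..\<tau>}"
          unfolding G_def
        proof (intro has_integral_sum finA has_integral_scaleR_left has_integral_mult_right)
          fix a assume "a \<in> A"
          have "((\<lambda>s. (\<tau> - s) powr (H - 1/2) * pp a (\<beta> + 1) s) has_integral
                 pp a (H - 1/2 + (\<beta> + 1) + 1) \<tau> * Beta (\<beta> + 1 + 1) (H - 1/2 + 1)) {0..\<tau>}"
            by (rule pp_Beta) (use H0 \<beta>1 a0[OF \<open>a \<in> A\<close>] \<tau> in auto)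
          then show "((\<lambda>s. (\<tau> - s) powr (H - 1/2) * pp a (\<beta> + 1) s) has_integral pp a 2 \<tau> * B2) {0..\<tau>}"
            unfolding e B2_def .
        qed
        have I2: "((\<lambda>s. (\<tau> - s) powr (H - 1/2) *\<^sub>R prim g s) has_integral G \<tau>) {0..\<tau>}"
        proof (rule has_integral_cong[THEN iffD1, OF _ I])
          fix s assume s: "s \<in> {0..\<tau>}"
          show "(\<Sum>a\<in>A. (\<kappa> / (\<beta> + 1) * ((\<tau> - s) powr (H - 1/2) * pp a (\<beta> + 1) s)) *\<^sub>R d a)
                = (\<tau> - s) powr (H - 1/2) *\<^sub>R prim g s"
            using s by (simp add: prim_g scaleR_sum_right mult_ac)
        qed
        show ?thesis unfolding F_def using integral_unique[OF I2] .
      qed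
      have DG: "(G has_vector_derivative (\<Sum>a\<in>A. (\<kappa> / (\<beta> + 1) * (2 * pp a 1 t * B2)) *\<^sub>R d a)) (at t)"
        unfolding G_def
      proof (intro has_vector_derivative_sum)
        fix a assume "a \<in> A"
        have "((\<lambda>x. \<kappa> / (\<beta> + 1) * (pp a 2 x * B2)) has_real_derivative \<kappa> / (\<beta> + 1) * (2 * pp a 1 t * B2)) (at t)"
        proof -
          have D0: "((\<lambda>x. B2 * pp a 2 x) has_real_derivative B2 * (2 * pp a 1 t)) (at t)"
            by (rule DERIV_cmult[OF pp_deriv2])
          have D1: "((\<lambda>x. \<kappa> / (\<beta> + 1) * (B2 * pp a 2 x)) has_real_derivative \<kappa> / (\<beta> + 1) * (B2 * (2 * pp a 1 t))) (at t)"
            by (rule DERIV_cmult[OF D0])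
          then show ?thesis by (simp add: mult_ac)
        qed
        then show "((\<lambda>x. (\<kappa> / (\<beta> + 1) * (pp a 2 x * B2)) *\<^sub>R d a) has_vector_derivative
                  (\<kappa> / (\<beta> + 1) * (2 * pp a 1 t * B2)) *\<^sub>R d a) (at t)"
          using has_vector_derivative_scaleR[of _ _ t UNIV "\<lambda>_. d a" 0] by (simp add: has_real_derivative_iff_has_vector_derivative[symmetric])
      qed
      have DF: "(F has_vector_derivative (\<Sum>a\<in>A. (\<kappa> / (\<beta> + 1) * (2 * pp a 1 t * B2)) *\<^sub>R d a)) (at t within {0..1})"
        by (rule has_vector_derivative_transform[OF t _ has_vector_derivative_at_within[OF DG]]) (simp add: FG)
      have "vector_derivative F (at t within cbox 0 1) = (\<Sum>a\<in>A. (\<kappa> / (\<beta> + 1) * (2 * pp a 1 t * B2)) *\<^sub>R d a)"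
        by (rule vector_derivative_within_cbox) (use t DF in auto)
      then have "KH \<alpha> H (prim g) t = \<alpha> *\<^sub>R (\<Sum>a\<in>A. (\<kappa> / (\<beta> + 1) * (2 * pp a 1 t * B2)) *\<^sub>R d a)"
        using False by (simp add: KH_def F_def[symmetric])
      also have "\<dots> = (\<Sum>a\<in>A. pp a 1 t *\<^sub>R d a)"
        unfolding scaleR_sum_right
      proof (rule sum.cong[OF refl])
        fix a assume "a \<in> A"
        have "\<alpha> * (\<kappa> / (\<beta> + 1) * (2 * pp a 1 t * B2)) = pp a 1 t"
        proof -
          have "\<kappa> / (\<beta> + 1) = 1 / (2 * \<alpha> * B2)" using False \<beta>1 by (simp add: \<kappa>_def)
          then show ?thesis using B2pos \<alpha> by simp
        qed
        then show "\<alpha> *\<^sub>R (\<kappa> / (\<beta> + 1) * (2 * pp a 1 t * B2)) *\<^sub>R d a = pp a 1 t *\<^sub>R d a"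
          by simp
      qed
      finally show ?thesis using frep[OF t] by simp
    qed
    have g_int1: "g integrable_on {0..1}" using g_int[of 1] by (auto simp: integrable_on_def)
    have g_abs: "g absolutely_integrable_on {0..1}" unfolding g_def
    proof (intro absolutely_integrable_sum finA absolutely_integrable_scaleR_right nonnegative_absolutely_integrable_1)
      fix a assume "a \<in> A"
      have "(pp a \<beta> has_integral pp a (\<beta> + 1) 1 / (\<beta> + 1)) {0..1}"
        by (rule pp_prim) (use \<beta>1 a0[OF \<open>a \<in> A\<close>] in auto)
      then show "(\<lambda>s. \<kappa> * pp a \<beta> s) integrable_on {0..1}"
        by (intro integrable_on_mult_right) blast
      show "\<And>x. x \<in> {0..1} \<Longrightarrow> 0 \<le> \<kappa> * pp a \<beta> x"
        using \<kappa>pos pp_nonneg by simp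
    qed
    define M where "M = (\<lambda>s. real (card A) * (\<Sum>a\<in>A. \<kappa>^2 * K^2 * pp a (2 * \<beta>) s))"
    have nb: "norm (g s)^2 \<le> M s" for s
    proof -
      have "norm (g s) \<le> (\<Sum>a\<in>A. norm ((\<kappa> * pp a \<beta> s) *\<^sub>R d a))"
        unfolding g_def by (rule norm_sum)
      also have "\<dots> \<le> (\<Sum>a\<in>A. \<kappa> * pp a \<beta> s * K)"
      proof (rule sum_mono)
        fix a assume "a \<in> A"
        have "norm ((\<kappa> * pp a \<beta> s) *\<^sub>R d a) = (\<kappa> * pp a \<beta> s) * norm (d a)"
          using \<kappa>pos pp_nonneg[of a \<beta> s] by simp
        also have "\<dots> \<le> \<kappa> * pp a \<beta> s * K"
          by (rule mult_left_mono[OF dK[OF \<open>a \<in> A\<close>]]) (use \<kappa>pos pp_nonneg[of a \<beta> s] in simp)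
        finally show "norm ((\<kappa> * pp a \<beta> s) *\<^sub>R d a) \<le> \<kappa> * pp a \<beta> s * K" .
      qed
      finally have n1: "norm (g s) \<le> (\<Sum>a\<in>A. \<kappa> * pp a \<beta> s * K)" .
      have "norm (g s)^2 \<le> (\<Sum>a\<in>A. \<kappa> * pp a \<beta> s * K)^2"
        by (rule power_mono[OF n1]) simp
      also have "\<dots> \<le> (\<Sum>a\<in>A. (\<kappa> * pp a \<beta> s * K)^2) * card A"
        by (rule sum_squared_le_sum_of_squares)
      also have "\<dots> = M s"
        unfolding M_def by (simp add: power_mult_distrib pp_sq mult_ac)
      finally show ?thesis .
    qed
    define IM where "IM = real (card A) * (\<Sum>a\<in>A. \<kappa>^2 * K^2 * (pp a (2 * \<beta> + 1) 1 / (2 * \<beta> + 1)))"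
    have M_int: "(M has_integral IM) {0..1}"
      unfolding M_def IM_def
    proof (rule has_integral_mult_right, rule has_integral_sum[OF finA])
      fix a assume "a \<in> A"
      have "(pp a (2 * \<beta>) has_integral pp a (2 * \<beta> + 1) 1 / (2 * \<beta> + 1)) {0..1}"
        by (rule pp_prim) (use \<beta>1 a0[OF \<open>a \<in> A\<close>] in auto)
      then show "((\<lambda>s. \<kappa>^2 * K^2 * pp a (2 * \<beta>) s) has_integral \<kappa>^2 * K^2 * (pp a (2 * \<beta> + 1) 1 / (2 * \<beta> + 1))) {0..1}"
        by (rule has_integral_mult_right)
    qed
    have meas: "(\<lambda>s. norm (g s)^2) \<in> borel_measurable (lebesgue_on {0..1})"
      using integrable_imp_measurable[OF g_int1] by measurable
    have n2_abs: "(\<lambda>s. norm (g s)^2) absolutely_integrable_on {0..1}"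
      by (rule measurable_bounded_by_integrable_imp_absolutely_integrable[OF meas _, of M])
         (use M_int nb in auto)
    then have n2_int: "(\<lambda>s. norm (g s)^2) integrable_on {0..1}"
      by (simp add: absolutely_integrable_on_def)
    have L2g: "L2_01 g" unfolding L2_01_def using g_abs n2_int by blast
    have IM_le: "IM \<le> (real (card A) * \<kappa> * K)^2 / (2 * \<beta> + 1)"
    proof -
      have "(\<Sum>a\<in>A. \<kappa>^2 * K^2 * (pp a (2 * \<beta> + 1) 1 / (2 * \<beta> + 1))) \<le> (\<Sum>a\<in>A. \<kappa>^2 * K^2 * (1 / (2 * \<beta> + 1)))"
      proof (rule sum_mono)
        fix a assume "a \<in> A"
        have "pp a (2 * \<beta> + 1) 1 \<le> 1" unfolding pp_def
          by (rule powr_le1) (use \<beta>1 a0[OF \<open>a \<in> A\<close>] in auto)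
        then show "\<kappa>^2 * K^2 * (pp a (2 * \<beta> + 1) 1 / (2 * \<beta> + 1)) \<le> \<kappa>^2 * K^2 * (1 / (2 * \<beta> + 1))"
          using \<beta>1 by (intro mult_left_mono divide_right_mono) auto
      qed
      then have "IM \<le> real (card A) * (real (card A) * (\<kappa>^2 * K^2 * (1 / (2 * \<beta> + 1))))"
        unfolding IM_def by (intro mult_left_mono) auto
      moreover have "real (card A) * (real (card A) * (\<kappa>^2 * K^2 * (1 / (2 * \<beta> + 1)))) = (real (card A) * \<kappa> * K)^2 / (2 * \<beta> + 1)"
        by (simp add: power_mult_distrib power2_eq_square)
      ultimately show ?thesis by (rule ord_le_eq_trans)
    qed
    have L2le: "L2_norm01 g \<le> C * K * real (card A)"
    proof -
      have "integral {0..1} (\<lambda>s. norm (g s)^2) \<le> integral {0..1} M"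
        by (rule integral_le[OF n2_int]) (use M_int nb in auto)
      also have "\<dots> = IM" using M_int by (simp add: integral_unique)
      finally have "integral {0..1} (\<lambda>s. norm (g s)^2) \<le> (real (card A) * \<kappa> * K)^2 / (2 * \<beta> + 1)"
        using IM_le by linarith
      then have "L2_norm01 g \<le> sqrt ((real (card A) * \<kappa> * K)^2 / (2 * \<beta> + 1))"
        unfolding L2_norm01_def by (rule real_sqrt_le_mono)
      also have "\<dots> = real (card A) * \<kappa> * K / sqrt (2 * \<beta> + 1)"
        using \<kappa>pos K0 by (simp add: real_sqrt_divide)
      also have "\<dots> = C * K * real (card A)" by (simp add: C_def)
      finally show ?thesis .
    qed
    have mem: "L2_01 g \<and> (\<forall>t\<in>{0..1}. f t = KH \<alpha> H (prim g) t)" using L2g KHeq by blast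
    show "f \<in> CM \<alpha> H" unfolding CM_def using mem by blast
    have "CM_norm \<alpha> H f \<le> L2_norm01 g"
      unfolding CM_norm_def
    proof (rule cInf_lower)
      show "L2_norm01 g \<in> {L2_norm01 g |g. L2_01 g \<and> (\<forall>t\<in>{0..1}. f t = KH \<alpha> H (prim g) t)}"
        using mem by blast
      show "bdd_below {L2_norm01 g |g. L2_01 g \<and> (\<forall>t\<in>{0..1}. f t = KH \<alpha> H (prim g) t)}"
      proof (rule bdd_belowI[of _ 0])
        fix x assume "x \<in> {L2_norm01 g |g. L2_01 g \<and> (\<forall>t\<in>{0..1}. f t = KH \<alpha> H (prim g) t)}"
        then obtain h :: "real \<Rightarrow> 'a" where x: "x = L2_norm01 h" and h: "L2_01 h" by blast
        have "0 \<le> integral {0..1} (\<lambda>s. norm (h s)^2)"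
          by (rule integral_nonneg) (use h in \<open>auto simp: L2_01_def\<close>)
        then show "0 \<le> x" unfolding x L2_norm01_def by simp
      qed
    qed
    then show "CM_norm \<alpha> H f \<le> C * K * real (card A)" using L2le by linarith
  qed
qed



lemma affine_deriv: "((\<lambda>x. (c::'a::euclidean_space) + (x - T) *\<^sub>R v) has_vector_derivative v) (at t within S)"
proof -
  have "((\<lambda>x. (x - T) *\<^sub>R v) has_vector_derivative ((t - T) *\<^sub>R 0 + 1 *\<^sub>R v)) (at t within S)"
  proof (rule has_vector_derivative_scaleR)
    show "((\<lambda>x. x - T) has_real_derivative 1) (at t within S)"
      using DERIV_diff[OF DERIV_ident DERIV_const[of T]] by simp
  qed simp
  then have "((\<lambda>x. (x - T) *\<^sub>R v) has_vector_derivative v) (at t within S)" by simp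
  then show ?thesis using has_vector_derivative_add[OF has_vector_derivative_const[of c]] by fastforce
qed

lemma decomp:
  fixes f :: "real \<Rightarrow> 'a::euclidean_space"
  assumes pl: "piecewise_linear01 f" and f0: "f 0 = 0"
  shows "\<exists>A d. finite A \<and> A \<subseteq> {0..1} \<and> 0 \<le> sup_fdot f \<and> (\<forall>a\<in>A. norm (d a) \<le> 2 * sup_fdot f) \<and>
     (\<forall>t\<in>{0..1}. f t = (\<Sum>a\<in>A. pp a 1 t *\<^sub>R d a)) \<and> card A \<le> 1 + card (disc_fdot f)"
proof -
  obtain ts :: "real list" where len: "length ts \<ge> 2" and sw: "sorted_wrt (<) ts" and hd0: "hd ts = 0"
    and last1: "last ts = 1"
    and aff: "\<forall>i < length ts - 1. \<exists>a b. \<forall>t\<in>{ts!i..ts!(i+1)}. f t = a + t *\<^sub>R b"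
    using pl unfolding piecewise_linear01_def by blast
  define n where "n = length ts"
  define m where "m = n - 1"
  define T where "T = (\<lambda>i. ts ! i)"
  have m1: "m \<ge> 1" and nm: "n = Suc m" using len by (auto simp: m_def n_def)
  have Tmono: "T i < T j" if "i < j" "j < n" for i j
    using sorted_wrt_nth_less[OF sw that(1)] that(2) by (simp add: T_def n_def)
  have Tle: "T i \<le> T j" if "i \<le> j" "j < n" for i j
    using Tmono[of i j] that by (cases "i = j") auto
  have ne: "ts \<noteq> []" using len by auto
  then have T0: "T 0 = 0" using hd0 hd_conv_nth[of ts] by (auto simp: T_def)
  have Tm: "T m = 1" using last1 last_conv_nth[OF ne] by (simp add: T_def m_def n_def)
  have T01: "T i \<in> {0..1}" if "i < n" for i
    using Tle[of 0 i] Tle[of i m] that T0 Tm nm by auto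
  have "\<forall>i. \<exists>bb. i < m \<longrightarrow> (\<forall>t\<in>{T i..T (Suc i)}. f t = f (T i) + (t - T i) *\<^sub>R bb)"
  proof
    fix i
    show "\<exists>bb. i < m \<longrightarrow> (\<forall>t\<in>{T i..T (Suc i)}. f t = f (T i) + (t - T i) *\<^sub>R bb)"
    proof (cases "i < m")
      case True
      then obtain a bb where ab: "\<forall>t\<in>{T i..T (Suc i)}. f t = a + t *\<^sub>R bb"
        using aff True unfolding T_def m_def n_def by (metis Suc_eq_plus1)
      have "T i \<le> T (Suc i)" using Tle[of i "Suc i"] True nm by auto
      then have "f (T i) = a + T i *\<^sub>R bb" using ab by auto
      then have "\<forall>t\<in>{T i..T (Suc i)}. f t = f (T i) + (t - T i) *\<^sub>R bb"
        using ab by (auto simp: algebra_simps)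
      then show ?thesis by blast
    qed auto
  qed
  then have "\<exists>b. \<forall>i. i < m \<longrightarrow> (\<forall>t\<in>{T i..T (Suc i)}. f t = f (T i) + (t - T i) *\<^sub>R b i)"
    by (rule choice)
  then obtain b where bpiece0: "\<forall>i. i < m \<longrightarrow> (\<forall>t\<in>{T i..T (Suc i)}. f t = f (T i) + (t - T i) *\<^sub>R b i)"
    by blast
  have bpiece: "\<And>i t. i < m \<Longrightarrow> t \<in> {T i..T (Suc i)} \<Longrightarrow> f t = f (T i) + (t - T i) *\<^sub>R b i"
    using bpiece0 by blast
  have deriv_int: "(f has_vector_derivative b i) (at t)" if "i < m" "T i < t" "t < T (Suc i)" for i t
  proof -
    have "((\<lambda>x. f (T i) + (x - T i) *\<^sub>R b i) has_vector_derivative b i) (at t)"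
      by (rule affine_deriv)
    then show ?thesis
      by (rule has_vector_derivative_transform_within_open[of _ _ _ "{T i<..<T (Suc i)}"])
         (use that in \<open>auto intro!: bpiece[symmetric]\<close>)
  qed
  have fdot_int: "fdot f t = b i" if "i < m" "T i < t" "t < T (Suc i)" for i t
    unfolding fdot_def using deriv_int[OF that] by (rule vector_derivative_at)
  have deriv_within: "(f has_vector_derivative b i) (at t within {T i..T (Suc i)})"
    if "i < m" "t \<in> {T i..T (Suc i)}" for i t
  proof -
    have D: "((\<lambda>x. f (T i) + (x - T i) *\<^sub>R b i) has_vector_derivative b i) (at t within {T i..T (Suc i)})"
      by (rule affine_deriv)
    show ?thesis
      by (rule has_vector_derivative_transform[OF that(2) _ D]) (use that in \<open>auto intro!: bpiece\<close>)
  qed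
  have find: "\<exists>i<m. T i \<le> t \<and> t < T (Suc i)" if "0 \<le> t" "t < 1" for t
  proof -
    define I where "I = {i. i < n \<and> T i \<le> t}"
    have finI: "finite I" unfolding I_def by auto
    have I0: "0 \<in> I" unfolding I_def using T0 that nm by auto
    define k where "k = Max I"
    have kI: "k \<in> I" unfolding k_def using finI I0 by (intro Max_in) auto
    have kmax: "j \<le> k" if "j \<in> I" for j unfolding k_def using finI that by auto
    have "k \<noteq> m" using kI Tm that by (auto simp: I_def)
    then have km: "k < m" using kI nm by (auto simp: I_def)
    have "\<not> T (Suc k) \<le> t"
    proof
      assume "T (Suc k) \<le> t"
      then have "Suc k \<in> I" using km nm by (auto simp: I_def)
      then show False using kmax by fastforce
    qed
    then show ?thesis using km kI by (auto simp: I_def)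
  qed
  define X where "X = {norm (fdot f t) | t. t \<in> {0<..<1} \<and> f differentiable (at t)}"
  have Xsub: "X \<subseteq> (\<lambda>i. norm (b i)) ` {..<m}"
  proof
    fix x assume "x \<in> X"
    then obtain t where x: "x = norm (fdot f t)" and t: "t \<in> {0<..<1}" and dt: "f differentiable (at t)"
      unfolding X_def by blast
    obtain i where i: "i < m" "T i \<le> t" "t < T (Suc i)" using find[of t] t by auto
    have "(f has_vector_derivative fdot f t) (at t)"
      unfolding fdot_def using dt vector_derivative_works by blast
    then have D1: "(f has_vector_derivative fdot f t) (at t within cbox (T i) (T (Suc i)))"
      by (rule has_vector_derivative_at_within)
    have D2: "(f has_vector_derivative b i) (at t within cbox (T i) (T (Suc i)))"
      using deriv_within[of i t] i by auto
    have "fdot f t = b i"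
      by (rule vector_derivative_unique_within_closed_interval[OF _ _ D1 D2]) (use i in auto)
    then show "x \<in> (\<lambda>i. norm (b i)) ` {..<m}" using x i by auto
  qed
  have bX: "norm (b i) \<in> X" if i: "i < m" for i
  proof -
    define t where "t = (T i + T (Suc i)) / 2"
    have lt: "T i < T (Suc i)" using Tmono[of i "Suc i"] i nm by auto
    have t1: "T i < t" "t < T (Suc i)" using lt by (auto simp: t_def)
    have "T 0 \<le> T i" "T (Suc i) \<le> T m" using Tle[of 0 i] Tle[of "Suc i" m] i nm by auto
    then have t01: "t \<in> {0<..<1}" using t1 T0 Tm by auto
    have "f differentiable (at t)" using deriv_int[OF i t1]
      unfolding vector_derivative_works[symmetric] by (auto simp: differentiable_def has_vector_derivative_def)
    moreover have "fdot f t = b i" by (rule fdot_int[OF i t1])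
    ultimately show ?thesis unfolding X_def using t01 by force
  qed
  have bddX: "bdd_above X"
    by (rule bdd_above_finite, rule finite_subset[OF Xsub]) auto
  have bS: "norm (b i) \<le> sup_fdot f" if "i < m" for i
    unfolding sup_fdot_def X_def[symmetric] by (rule cSup_upper[OF bX[OF that] bddX])
  have "norm (b 0) \<le> sup_fdot f" using bS[of 0] m1 by simp
  then have S0: "0 \<le> sup_fdot f" by (meson norm_ge_zero order_trans)
  have Dsub: "disc_fdot f \<subseteq> set ts"
  proof
    fix t assume tD: "t \<in> disc_fdot f"
    then have t: "t \<in> {0<..<1}" and nc: "\<not> isCont (fdot f) t" by (auto simp: disc_fdot_def)
    show "t \<in> set ts"
    proof (rule ccontr)
      assume nt: "t \<notin> set ts"
      obtain i where i: "i < m" "T i \<le> t" "t < T (Suc i)" using find[of t] t by auto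
      have "T i \<in> set ts" using i nm by (simp add: T_def n_def)
      then have ti: "T i < t" using i nt by (cases "T i = t") auto
      have ev: "eventually (\<lambda>x. fdot f x = b i) (at t)"
        unfolding eventually_at_topological
        by (rule exI[of _ "{T i<..<T (Suc i)}"]) (use i ti fdot_int in auto)
      have "(fdot f \<longlongrightarrow> b i) (at t)" using tendsto_eventually[OF ev] by simp
      moreover have "fdot f t = b i" using fdot_int[OF i(1) ti i(3)] .
      ultimately have "isCont (fdot f) t" by (simp add: isCont_def)
      then show False using nc by simp
    qed
  qed
  have finD: "finite (disc_fdot f)" by (rule finite_subset[OF Dsub]) simp
  have kink: "T i \<in> disc_fdot f" if i: "0 < i" "i < m" "b i \<noteq> b (i - 1)" for i
  proof -
    have "T 0 < T i" "T i < T m" using Tmono[of 0 i] Tmono[of i m] i nm by auto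
    then have t01: "T i \<in> {0<..<1}" using T0 Tm by auto
    have lt1: "T i < T (Suc i)" using Tmono[of i "Suc i"] i nm by auto
    have lt0: "T (i - 1) < T i" using Tmono[of "i - 1" i] i nm by auto
    have "\<not> isCont (fdot f) (T i)"
    proof
      assume c: "isCont (fdot f) (T i)"
      then have L: "(fdot f \<longlongrightarrow> fdot f (T i)) (at (T i))" by (simp add: isCont_def)
      have Lr: "(fdot f \<longlongrightarrow> fdot f (T i)) (at_right (T i))"
        by (rule tendsto_within_subset[OF L]) simp
      have Ll: "(fdot f \<longlongrightarrow> fdot f (T i)) (at_left (T i))"
        by (rule tendsto_within_subset[OF L]) simp
      have evr: "eventually (\<lambda>x. fdot f x = b i) (at_right (T i))"
        unfolding eventually_at_right[OF lt1]
        by (rule exI[of _ "T (Suc i)"]) (use lt1 i fdot_int in auto)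
      have evl: "eventually (\<lambda>x. fdot f x = b (i - 1)) (at_left (T i))"
      proof -
        have im: "i - 1 < m" "Suc (i - 1) = i" using i by auto
        show ?thesis
          unfolding eventually_at_left[OF lt0]
          by (rule exI[of _ "T (i - 1)"]) (use lt0 im fdot_int[of "i - 1"] in auto)
      qed
      have "fdot f (T i) = b i"
        using tendsto_unique[OF trivial_limit_at_right_real Lr tendsto_eventually[OF evr]] .
      moreover have "fdot f (T i) = b (i - 1)"
        using tendsto_unique[OF trivial_limit_at_left_real Ll tendsto_eventually[OF evl]] .
      ultimately show False using i by simp
    qed
    then show ?thesis using t01 by (simp add: disc_fdot_def)
  qed
  define c where "c = (\<lambda>i. b i - (if i = 0 then 0 else b (i - 1)))"
  have P: "(\<Sum>i<Suc k. (t - T i) *\<^sub>R c i) = f (T k) + (t - T k) *\<^sub>R b k" if "k < m" for k t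
    using that
  proof (induction k)
    case 0
    then show ?case using T0 f0 by (simp add: c_def)
  next
    case (Suc k)
    then have km: "k < m" by simp
    have fT: "f (T (Suc k)) = f (T k) + (T (Suc k) - T k) *\<^sub>R b k"
      using bpiece[OF km, of "T (Suc k)"] Tle[of k "Suc k"] km nm by auto
    have "(\<Sum>i<Suc (Suc k). (t - T i) *\<^sub>R c i) = (\<Sum>i<Suc k. (t - T i) *\<^sub>R c i) + (t - T (Suc k)) *\<^sub>R c (Suc k)"
      by simp
    also have "\<dots> = f (T k) + (t - T k) *\<^sub>R b k + (t - T (Suc k)) *\<^sub>R (b (Suc k) - b k)"
      using Suc.IH[OF km] by (simp add: c_def)
    also have "\<dots> = f (T (Suc k)) + (t - T (Suc k)) *\<^sub>R b (Suc k)"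
      unfolding fT by (simp add: algebra_simps)
    finally show ?case .
  qed
  have rep: "f t = (\<Sum>i<m. pp (T i) 1 t *\<^sub>R c i)" if t: "t \<in> {0..1}" for t
  proof -
    obtain k where k: "k < m" "T k \<le> t" "t \<le> T (Suc k)"
    proof (cases "t < 1")
      case True
      then show ?thesis using find[of t] t that by force
    next
      case False
      then have "t = 1" using t by auto
      moreover have "T (m - 1) \<le> T m" using Tle[of "m - 1" m] nm by auto
      ultimately show ?thesis using that[of "m - 1"] m1 Tm by auto
    qed
    have "(\<Sum>i<m. pp (T i) 1 t *\<^sub>R c i) = (\<Sum>i<Suc k. pp (T i) 1 t *\<^sub>R c i)"
    proof (rule sum.mono_neutral_right)
      show "\<forall>i\<in>{..<m} - {..<Suc k}. pp (T i) 1 t *\<^sub>R c i = 0"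
      proof
        fix i assume "i \<in> {..<m} - {..<Suc k}"
        then have "Suc k \<le> i" "i < n" using nm by auto
        then have "T (Suc k) \<le> T i" using Tle by blast
        then show "pp (T i) 1 t *\<^sub>R c i = 0" using k by (simp add: pp_one)
      qed
    qed (use k in auto)
    also have "\<dots> = (\<Sum>i<Suc k. (t - T i) *\<^sub>R c i)"
    proof (rule sum.cong[OF refl])
      fix i assume "i \<in> {..<Suc k}"
      then have "T i \<le> T k" using Tle[of i k] k nm by auto
      then show "pp (T i) 1 t *\<^sub>R c i = (t - T i) *\<^sub>R c i" using k by (simp add: pp_one)
    qed
    also have "\<dots> = f (T k) + (t - T k) *\<^sub>R b k" by (rule P[OF k(1)])
    also have "\<dots> = f t" using bpiece[OF k(1), of t] k by auto
    finally show ?thesis by simp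
  qed
  define J where "J = {i. i < m \<and> c i \<noteq> 0}"
  define A where "A = T ` J"
  define d where "d = (\<lambda>a. c (inv_into J T a))"
  have injT: "inj_on T {..<n}"
  proof (rule inj_onI)
    fix i j assume "i \<in> {..<n}" "j \<in> {..<n}" "T i = T j"
    then show "i = j" using Tmono[of i j] Tmono[of j i] by (cases i j rule: linorder_cases) auto
  qed
  have injJ: "inj_on T J" by (rule inj_on_subset[OF injT]) (auto simp: J_def nm)
  have finJ: "finite J" by (simp add: J_def)
  have dT: "d (T i) = c i" if "i \<in> J" for i unfolding d_def using inv_into_f_f[OF injJ that] by simp
  have sumA: "(\<Sum>a\<in>A. pp a 1 t *\<^sub>R d a) = (\<Sum>i<m. pp (T i) 1 t *\<^sub>R c i)" for t
  proof -
    have "(\<Sum>a\<in>A. pp a 1 t *\<^sub>R d a) = (\<Sum>i\<in>J. pp (T i) 1 t *\<^sub>R d (T i))"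
      unfolding A_def by (rule sum.reindex[OF injJ, unfolded comp_def])
    also have "\<dots> = (\<Sum>i\<in>J. pp (T i) 1 t *\<^sub>R c i)" by (rule sum.cong) (auto simp: dT)
    also have "\<dots> = (\<Sum>i<m. pp (T i) 1 t *\<^sub>R c i)"
      by (rule sum.mono_neutral_left) (auto simp: J_def)
    finally show ?thesis .
  qed
  have normd: "norm (d a) \<le> 2 * sup_fdot f" if aA: "a \<in> A" for a
  proof -
    obtain i where i: "i \<in> J" and a: "a = T i" using aA unfolding A_def by blast
    have im: "i < m" using i by (simp add: J_def)
    have "norm (c i) \<le> 2 * sup_fdot f"
    proof (cases "i = 0")
      case True
      then show ?thesis using bS[OF im] S0 by (simp add: c_def)
    next
      case False
      have "norm (c i) \<le> norm (b i) + norm (b (i - 1))"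
        using False by (simp add: c_def norm_triangle_ineq4)
      also have "\<dots> \<le> 2 * sup_fdot f"
      proof -
        have "i - 1 < m" using im by simp
        then show ?thesis using bS[OF im] bS[of "i - 1"] by linarith
      qed
      finally show ?thesis .
    qed
    then show ?thesis using dT[OF i] a by simp
  qed
  define J' where "J' = {i. 0 < i \<and> i < m \<and> b i \<noteq> b (i - 1)}"
  have JJ': "J \<subseteq> insert 0 J'" by (auto simp: J_def J'_def c_def)
  have "card A = card J" unfolding A_def by (rule card_image[OF injJ])
  also have "\<dots> \<le> card (insert 0 J')" by (rule card_mono) (use JJ' in \<open>auto simp: J'_def\<close>)
  also have "\<dots> \<le> Suc (card J')" by (simp add: card_insert_le_m1 card_insert_if)
  also have "card J' = card (T ` J')"
    by (rule card_image[symmetric], rule inj_on_subset[OF injT]) (auto simp: J'_def nm)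
  also have "\<dots> \<le> card (disc_fdot f)"
    by (rule card_mono[OF finD]) (auto simp: J'_def intro: kink)
  finally have cardA: "card A \<le> 1 + card (disc_fdot f)" by simp
  have finA: "finite A" by (simp add: A_def finJ)
  have A01: "A \<subseteq> {0..1}" using T01 by (auto simp: A_def J_def nm)
  show ?thesis
    by (rule exI[of _ A], rule exI[of _ d]) (use finA A01 S0 normd rep sumA cardA in auto)
qed


theorem lemma3p11:
  fixes \<alpha> H :: real
  assumes "0 < H" and "H < 1" and "\<alpha> > 0"
  shows "\<exists>C>0. \<forall>f :: real \<Rightarrow> real ^ 'n.
           piecewise_linear01 f \<and> f 0 = 0 \<longrightarrow>
             f \<in> CM \<alpha> H \<and>
             CM_norm \<alpha> H f \<le> C * sup_fdot f * (1 + real (card (disc_fdot f)))"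
proof -
  obtain C where C: "C > 0" and HC: "\<forall>(A::real set) (d::real \<Rightarrow> real ^ 'n) K f.
     finite A \<and> A \<subseteq> {0..1} \<and> K \<ge> 0 \<and> (\<forall>a\<in>A. norm (d a) \<le> K) \<and>
     (\<forall>t\<in>{0..1}. f t = (\<Sum>a\<in>A. pp a 1 t *\<^sub>R d a)) \<longrightarrow>
     f \<in> CM \<alpha> H \<and> CM_norm \<alpha> H f \<le> C * K * real (card A)"
    using core[OF assms] by blast
  show ?thesis
  proof (rule exI[of _ "2 * C"], intro conjI allI impI)
    show "0 < 2 * C" using C by simp
    fix f :: "real \<Rightarrow> real ^ 'n"
    assume f: "piecewise_linear01 f \<and> f 0 = 0"
    then obtain A d where A: "finite A" "A \<subseteq> {0..1}" "0 \<le> sup_fdot f"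
      "\<forall>a\<in>A. norm (d a) \<le> 2 * sup_fdot f" "\<forall>t\<in>{0..1}. f t = (\<Sum>a\<in>A. pp a 1 t *\<^sub>R d a)"
      "card A \<le> 1 + card (disc_fdot f)"
      using decomp[of f] by blast
    have R: "f \<in> CM \<alpha> H \<and> CM_norm \<alpha> H f \<le> C * (2 * sup_fdot f) * real (card A)"
    proof -
      have "finite A \<and> A \<subseteq> {0..1} \<and> 2 * sup_fdot f \<ge> 0 \<and> (\<forall>a\<in>A. norm (d a) \<le> 2 * sup_fdot f) \<and>
          (\<forall>t\<in>{0..1}. f t = (\<Sum>a\<in>A. pp a 1 t *\<^sub>R d a))" using A by simp
      then show ?thesis using HC by blast
    qed
    then show "f \<in> CM \<alpha> H" by simp
    have "real (card A) \<le> 1 + real (card (disc_fdot f))" using A(6) by linarith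
    then have "C * (2 * sup_fdot f) * real (card A) \<le> C * (2 * sup_fdot f) * (1 + real (card (disc_fdot f)))"
      by (rule mult_left_mono) (use C A(3) in simp)
    then show "CM_norm \<alpha> H f \<le> 2 * C * sup_fdot f * (1 + real (card (disc_fdot f)))"
      using R by (simp add: mult_ac)
  qed
qed

end
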